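(* Under the standing assumptions below, let $\kappa>0$ and $\tau\ge L_{\nabla P_\rho}+\kappa$. Then for each $(x,z,u,v)\in\mathcal X\times\mathcal Y\times\mathbb R^{d_y}\times\mathbb R^{d_\lambda}$ the problem $\max_{y\in\mathcal Y,\lambda\in\Lambda}Q(x,z,u,v,y,\lambda)$ has a unique maximizer $(y_*(x,z,u,v),\lambda_*(x,z,u,v))$, and for any two such points $w^1=(x^1,z^1,u^1,v^1)$, $w^2=(x^2,z^2,u^2,v^2)$, $$\|(y_*(w^1),\lambda_*(w^1))-(y_*(w^2),\lambda_*(w^2))\|\le (L_{\nabla P_\rho}+\tau)\kappa^{-1}\|w^1-w^2\|.$$ Moreover $\vartheta$ is continuously differentiable with $$\nabla\vartheta(x,z,u,v)=\Big(\nabla_x f(x,y_*,\lambda_* ),\ \rho\nabla_1 g(z,\lambda_* ),\ \tau(y_*-u),\ \tau(\lambda_*-v)\Big),$$ where $(y_*,\lambda_* )=(y_*(x,z,u,v),\lambda_*(x,z,u,v))$ and $\nabla_1 g$ denotes the gradient of $g$ in its first argument, and $$\|\nabla\vartheta(w^1)-\nabla\vartheta(w^2)\|\le L_{\nabla\vartheta}\|w^1-w^2\|,\qquad L_{\nabla\vartheta}:=(L_{\nabla f}+\rho L_{\nabla g}+2\tau)\big(1+(L_{\nabla P_\rho}+\tau)\kappa^{-1}\big).$$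
   Context: Standing setting. $\mathcal X\subset\mathbb R^{d_x}$, $\mathcal Y\subset\mathbb R^{d_y}$, $\Lambda\subset\mathbb R^{d_\lambda}$ are nonempty convex compact sets. $f(x,y,\lambda):=\bar f(x,y)+\lambda^T(Ax+By-c)$ with $\bar f$ continuously differentiable, $A,B,c$ fixed matrices/vector of compatible sizes; $L_{\nabla f}>0$ is a Lipschitz constant of $\nabla f$ on $\mathcal X\times\mathcal Y\times\Lambda$. $g:\mathbb R^{d_y}\times\mathbb R^{d_\lambda}\to\mathbb R$ is continuously differentiable, $\nabla g$ is $L_{\nabla g}$-Lipschitz on $\mathcal Y\times\Lambda$, and $g(\cdot,\lambda)$ is convex for each $\lambda\in\Lambda$. Moreover $g$ has a saddle point: there is $(z^*,\lambda^* )\in\mathcal Y\times\Lambda$ with $g(z^*,\lambda^* )=\max_{\lambda\in\Lambda}\min_{z\in\mathcal Y}g(z,\lambda)=\min_{z\in\mathcal Y}\max_{\lambda\in\Lambda}g(z,\lambda)$. For $\rho>0$: $P_\rho(x,y,\lambda,z):=f(x,y,\lambda)-\rho(g(y,\lambda)-g(z,\lambda))$ and $L_{\nabla P_\rho}:=L_{\nabla f}+2\rho L_{\nabla g}$ (a Lipschitz constant of $\nabla P_\rho$). For $\tau>0$ and $(u,v)\in\mathbb R^{d_y}\times\mathbb R^{d_\lambda}$: $Q(x,z,u,v,y,\lambda):=P_\rho(x,y,\lambda,z)-\frac{\tau}{2}\|(y,\lambda)-(u,v)\|^2$ and $\vartheta(x,z,u,v):=\max_{y\in\mathcal Y,\lambda\in\Lambda}Q(x,z,u,v,y,\lambda)$,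 defined on $\mathcal X\times\mathcal Y\times\mathbb R^{d_y}\times\mathbb R^{d_\lambda}$. Norms are Euclidean. *)

theory Defs
  imports "HOL-Analysis.Analysis"
begin

definition grad :: "('a::euclidean_space \<Rightarrow> real) \<Rightarrow> 'a \<Rightarrow> 'a" where
  "grad F p = (THE G. (F has_derivative (\<lambda>h. G \<bullet> h)) (at p))"

definition ffun :: "((real^'dx) \<times> (real^'dy) \<Rightarrow> real) \<Rightarrow> (real^'dx^'dl) \<Rightarrow> (real^'dy^'dl) \<Rightarrow> (real^'dl)
    \<Rightarrow> ((real^'dx) \<times> (real^'dy)) \<times> (real^'dl) \<Rightarrow> real" where
  "ffun fbar A B c = (\<lambda>((x, y), l). fbar (x, y) + l \<bullet> (A *v x + B *v y - c))"

definition Pfun :: "((real^'dx) \<times> (real^'dy) \<Rightarrow> real) \<Rightarrow> (real^'dx^'dl) \<Rightarrow> (real^'dy^'dl) \<Rightarrow> (real^'dl)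
    \<Rightarrow> ((real^'dy) \<times> (real^'dl) \<Rightarrow> real) \<Rightarrow> real
    \<Rightarrow> (real^'dx) \<Rightarrow> (real^'dy) \<Rightarrow> (real^'dl) \<Rightarrow> (real^'dy) \<Rightarrow> real" where
  "Pfun fbar A B c g rho x y l z = ffun fbar A B c ((x, y), l) - rho * (g (y, l) - g (z, l))"

definition Qfun :: "((real^'dx) \<times> (real^'dy) \<Rightarrow> real) \<Rightarrow> (real^'dx^'dl) \<Rightarrow> (real^'dy^'dl) \<Rightarrow> (real^'dl)
    \<Rightarrow> ((real^'dy) \<times> (real^'dl) \<Rightarrow> real) \<Rightarrow> real \<Rightarrow> real
    \<Rightarrow> (real^'dx) \<Rightarrow> (real^'dy) \<Rightarrow> (real^'dy) \<Rightarrow> (real^'dl) \<Rightarrow> (real^'dy) \<Rightarrow> (real^'dl) \<Rightarrow> real" where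
  "Qfun fbar A B c g rho tau x z u v y l =
     Pfun fbar A B c g rho x y l z - tau / 2 * (norm ((y, l) - (u, v)))\<^sup>2"

definition theta :: "((real^'dx) \<times> (real^'dy) \<Rightarrow> real) \<Rightarrow> (real^'dx^'dl) \<Rightarrow> (real^'dy^'dl) \<Rightarrow> (real^'dl)
    \<Rightarrow> ((real^'dy) \<times> (real^'dl) \<Rightarrow> real) \<Rightarrow> real \<Rightarrow> real \<Rightarrow> (real^'dy) set \<Rightarrow> (real^'dl) set
    \<Rightarrow> (real^'dx) \<times> (real^'dy) \<times> (real^'dy) \<times> (real^'dl) \<Rightarrow> real" where
  "theta fbar A B c g rho tau Y Lam = (\<lambda>(x, z, u, v).
     (SUP p \<in> Y \<times> Lam. Qfun fbar A B c g rho tau x z u v (fst p) (snd p)))"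

end

theory Submission
  imports Defs
begin


lemma grad_eq:
  fixes F :: "'a::euclidean_space \<Rightarrow> real"
  assumes "(F has_derivative (\<lambda>h. G \<bullet> h)) (at p)"
  shows "grad F p = G"
  unfolding grad_def
proof (rule the_equality)
  show "(F has_derivative (\<lambda>h. G \<bullet> h)) (at p)" by fact
  fix G' assume "(F has_derivative (\<lambda>h. G' \<bullet> h)) (at p)"
  then have "(\<lambda>h. G' \<bullet> h) = (\<lambda>h. G \<bullet> h)" using assms has_derivative_unique by blast
  then have "G' \<bullet> (G' - G) = G \<bullet> (G' - G)" by metis
  then have "(G' - G) \<bullet> (G' - G) = 0" by (simp add: inner_diff_left)
  then show "G' = G" by simp
qed

lemma grad_works:
  fixes F :: "'a::euclidean_space \<Rightarrow> real"
  assumes "F differentiable (at p)"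
  shows "(F has_derivative (\<lambda>h. grad F p \<bullet> h)) (at p)"
proof -
  obtain F' where d: "(F has_derivative F') (at p)" using assms differentiable_def by blast
  then have lin: "linear F'" using has_derivative_linear by blast
  have "F' = (\<lambda>h. adjoint F' 1 \<bullet> h)"
    using adjoint_clauses(2)[OF lin, of 1] by (auto simp: fun_eq_iff)
  then have "(F has_derivative (\<lambda>h. adjoint F' 1 \<bullet> h)) (at p)" using d by simp
  then show ?thesis using grad_eq by metis
qed

lemma quad_bound:
  fixes F :: "'a::euclidean_space \<Rightarrow> real"
  assumes S: "convex S"
    and der: "\<And>q. q \<in> S \<Longrightarrow> (F has_derivative (\<lambda>h. GF q \<bullet> h)) (at q)"
    and lip: "\<And>q1 q2. q1 \<in> S \<Longrightarrow> q2 \<in> S \<Longrightarrow> norm (GF q1 - GF q2) \<le> L * norm (q1 - q2)"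
    and L: "L \<ge> 0" and a: "a \<in> S" and b: "b \<in> S"
  shows "\<bar>F b - F a - GF a \<bullet> (b - a)\<bar> \<le> L * (norm (b - a))\<^sup>2"
proof -
  let ?T = "closed_segment a b"
  have T: "convex ?T" by simp
  have TS: "?T \<subseteq> S" using S a b by (simp add: closed_segment_subset)
  define phi where "phi q = F q - GF a \<bullet> q" for q
  have d: "(phi has_derivative (\<lambda>h. (GF q - GF a) \<bullet> h)) (at q within ?T)" if "q \<in> ?T" for q
  proof -
    have "(phi has_derivative (\<lambda>h. GF q \<bullet> h - GF a \<bullet> h)) (at q)"
      unfolding phi_def using der[of q] that TS
      by (auto intro!: derivative_eq_intros)
    then show ?thesis by (simp add: inner_diff_left has_derivative_at_withinI)
  qed
  have B: "onorm (\<lambda>h. (GF q - GF a) \<bullet> h) \<le> L * norm (b - a)" if "q \<in> ?T" for q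
  proof (rule onorm_le)
    fix h
    have "norm ((GF q - GF a) \<bullet> h) \<le> norm (GF q - GF a) * norm h"
      using Cauchy_Schwarz_ineq2 by simp
    also have "\<dots> \<le> L * norm (q - a) * norm h"
      using lip[of q a] that TS a by (simp add: mult_right_mono subset_iff)
    also have "\<dots> \<le> L * norm (b - a) * norm h"
    proof -
      have "norm (q - a) \<le> norm (b - a)" using that
        by (rule segment_bound1)
      then show ?thesis using L by (simp add: mult_left_mono mult_right_mono)
    qed
    finally show "norm ((GF q - GF a) \<bullet> h) \<le> L * norm (b - a) * norm h" .
  qed
  have "norm (phi b - phi a) \<le> L * norm (b - a) * norm (b - a)"
    by (rule differentiable_bound[OF T d B]) auto
  then show ?thesis unfolding phi_def by (simp add: power2_eq_square inner_diff_right algebra_simps)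
qed

lemma foc:
  fixes F :: "'a::euclidean_space \<Rightarrow> real"
  assumes S: "convex S"
    and der: "\<And>q. q \<in> S \<Longrightarrow> (F has_derivative (\<lambda>h. GF q \<bullet> h)) (at q)"
    and lip: "\<And>q1 q2. q1 \<in> S \<Longrightarrow> q2 \<in> S \<Longrightarrow> norm (GF q1 - GF q2) \<le> L * norm (q1 - q2)"
    and L: "L \<ge> 0" and a: "a \<in> S" and b: "b \<in> S" and mx: "\<And>q. q \<in> S \<Longrightarrow> F q \<le> F a"
  shows "GF a \<bullet> (b - a) \<le> 0"
proof (rule ccontr)
  let ?c = "GF a \<bullet> (b - a)" and ?N = "(norm (b - a))\<^sup>2"
  assume "\<not> ?c \<le> 0"
  then have c: "?c > 0" by simp
  define t where "t = min 1 (?c / (2 * (L * ?N + 1)))"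
  have den: "L * ?N + 1 > 0" using L by (simp add: add_nonneg_pos)
  have t0: "t > 0" using c den by (simp add: t_def)
  have t1: "t \<le> 1" by (simp add: t_def)
  define bt where "bt = a + t *\<^sub>R (b - a)"
  have "bt = (1 - t) *\<^sub>R a + t *\<^sub>R b" by (simp add: bt_def algebra_simps)
  then have bt: "bt \<in> S" using S a b t0 t1 by (simp add: convex_def)
  have e1: "GF a \<bullet> (bt - a) = t * ?c" by (simp add: bt_def)
  have e2: "(norm (bt - a))\<^sup>2 = t\<^sup>2 * ?N" by (simp add: bt_def power_mult_distrib t0 less_imp_le)
  have "\<bar>F bt - F a - GF a \<bullet> (bt - a)\<bar> \<le> L * (norm (bt - a))\<^sup>2"
    by (rule quad_bound[OF S der lip L a bt])
  then have q: "\<bar>F bt - F a - t * ?c\<bar> \<le> L * (t\<^sup>2 * ?N)" by (simp only: e1 e2)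
  moreover have "F bt \<le> F a" using mx bt by blast
  ultimately have "t * ?c \<le> L * (t\<^sup>2 * ?N)" by linarith
  then have "t * ?c \<le> t * (L * t * ?N)" by (simp add: power2_eq_square algebra_simps)
  then have "?c \<le> L * t * ?N" using t0 by (simp only: mult_le_cancel_left_pos)
  moreover have "L * t * ?N \<le> ?c / 2"
  proof -
    have "t \<le> ?c / (2 * (L * ?N + 1))" by (simp add: t_def)
    then have "(L * ?N) * t \<le> (L * ?N) * (?c / (2 * (L * ?N + 1)))"
      using L by (intro mult_left_mono) auto
    also have "\<dots> \<le> ?c / 2" using c den L by (simp add: field_simps)
    finally show ?thesis by (simp add: algebra_simps)
  qed
  ultimately show False using c by linarith
qed



lemma inner_Pair_right [simp]: "q \<bullet> (a, b) = fst q \<bullet> a + snd q \<bullet> b"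
  by (cases q) simp

lemma norm3: "norm (a - b + c) \<le> norm a + norm b + norm (c::'a::real_normed_vector)"
proof -
  have "norm (a - b + c) \<le> norm (a - b) + norm c" by (rule norm_triangle_ineq)
  also have "norm (a - b) \<le> norm a + norm b" by (rule norm_triangle_ineq4)
  finally show ?thesis by simp
qed

lemma norm_assoc_le: "norm ((a, b), c) \<le> norm a + norm (b, c)"
proof -
  have "norm ((a, b), c) = norm (a, (b, c))" by (simp add: norm_Pair add.assoc)
  then show ?thesis using norm_Pair_le[of a "(b, c)"] by simp
qed

lemma norm_fst_le': "norm (fst q) \<le> norm q"
  by (cases q) (simp add: norm_fst_le)
lemma norm_snd_le': "norm (snd q) \<le> norm q"
  by (cases q) (simp add: norm_snd_le)
lemma norm_sndfst_snd: "norm (snd (fst D), snd D) \<le> norm D"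
  by (cases D) (auto simp: norm_Pair norm_snd_le' intro!: real_sqrt_le_mono power_mono)
lemma norm_0_snd: "norm (0, snd D) \<le> norm D"
  by (cases D) (simp add: norm_Pair norm_snd_le)
lemma norm_fstfst: "norm (fst (fst D)) \<le> norm D"
  by (rule order_trans[OF norm_fst_le' norm_fst_le'])
lemma norm_0_pair: "norm ((0, a), b) = norm (a, b)"
  by (simp add: norm_Pair)
lemma norm_pair_0: "norm ((a, 0), 0) = norm a"
  by (simp add: norm_Pair)

definition QQ where
  "QQ F g rho tau w p = (case w of (x, z, u, v) \<Rightarrow>
     F ((x, fst p), snd p) - rho * (g p - g (z, snd p)) - tau / 2 * (norm (p - (u, v)))\<^sup>2)"

definition PP where
  "PP GF Gg rho x z p = (snd (fst (GF ((x, fst p), snd p))), snd (GF ((x, fst p), snd p)))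
        - rho *\<^sub>R Gg p + rho *\<^sub>R (0, snd (Gg (z, snd p)))"

definition dQ where
  "dQ GF Gg rho tau w p = (case w of (x, z, u, v) \<Rightarrow> PP GF Gg rho x z p - tau *\<^sub>R (p - (u, v)))"

definition GW where
  "GW GF Gg rho tau w p = (case w of (x, z, u, v) \<Rightarrow>
     (fst (fst (GF ((x, fst p), snd p))), rho *\<^sub>R fst (Gg (z, snd p)),
      tau *\<^sub>R (fst p - u), tau *\<^sub>R (snd p - v)))"

lemma deriv_from_quad:
  fixes f :: "'a::real_inner \<Rightarrow> real"
  assumes b: "\<And>y. y \<in> T \<Longrightarrow> \<bar>f y - f x - G \<bullet> (y - x)\<bar> \<le> M * (norm (y - x))\<^sup>2"
  shows "(f has_derivative (\<lambda>h. G \<bullet> h)) (at x within T)"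
  unfolding has_derivative_within
proof (intro conjI)
  show "bounded_linear ((\<bullet>) G)" by (rule bounded_linear_inner_right)
  have ev: "\<forall>\<^sub>F y in at x within T. norm ((1 / norm (y - x)) *\<^sub>R (f y - (f x + G \<bullet> (y - x)))) \<le> M * norm (y - x)"
    unfolding eventually_at_filter
  proof (intro always_eventually allI impI)
    fix y assume y: "y \<noteq> x" "y \<in> T"
    then have n: "norm (y - x) > 0" by simp
    have "norm ((1 / norm (y - x)) *\<^sub>R (f y - (f x + G \<bullet> (y - x)))) = \<bar>f y - f x - G \<bullet> (y - x)\<bar> / norm (y - x)"
      by (simp add: abs_divide diff_diff_eq)
    also have "\<dots> \<le> M * (norm (y - x))\<^sup>2 / norm (y - x)"
      using b[OF y(2)] n by (simp add: divide_right_mono)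
    also have "\<dots> = M * norm (y - x)" using n by (simp add: power2_eq_square)
    finally show "norm ((1 / norm (y - x)) *\<^sub>R (f y - (f x + G \<bullet> (y - x)))) \<le> M * norm (y - x)" .
  qed
  have lim: "((\<lambda>y. M * norm (y - x)) \<longlongrightarrow> 0) (at x within T)"
  proof -
    have "((\<lambda>y. M * norm (y - x)) \<longlongrightarrow> M * norm (x - x)) (at x within T)"
      by (intro tendsto_intros)
    then show ?thesis by simp
  qed
  show "((\<lambda>y. (1 / norm (y - x)) *\<^sub>R (f y - (f x + G \<bullet> (y - x)))) \<longlongrightarrow> 0) (at x within T)"
    by (rule Lim_null_comparison[OF ev lim])
qed

context
  fixes F :: "((real^'dx) \<times> (real^'dy)) \<times> (real^'dl) \<Rightarrow> real"
    and GF :: "((real^'dx) \<times> (real^'dy)) \<times> (real^'dl) \<Rightarrow> ((real^'dx) \<times> (real^'dy)) \<times> (real^'dl)"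
    and g :: "(real^'dy) \<times> (real^'dl) \<Rightarrow> real"
    and Gg :: "(real^'dy) \<times> (real^'dl) \<Rightarrow> (real^'dy) \<times> (real^'dl)"
    and rho tau :: real
  assumes DF: "\<And>q. (F has_derivative (\<lambda>h. GF q \<bullet> h)) (at q)"
    and Dg: "\<And>q. (g has_derivative (\<lambda>h. Gg q \<bullet> h)) (at q)"
  fixes X Y Lam and Lf Lg :: real
  assumes Lf0: "Lf \<ge> 0"
    and LF: "\<And>q1 q2. q1 \<in> (X \<times> Y) \<times> Lam \<Longrightarrow> q2 \<in> (X \<times> Y) \<times> Lam \<Longrightarrow> norm (GF q1 - GF q2) \<le> Lf * norm (q1 - q2)"
    and Lg0: "Lg \<ge> 0"
    and LG: "\<And>q1 q2. q1 \<in> Y \<times> Lam \<Longrightarrow> q2 \<in> Y \<times> Lam \<Longrightarrow> norm (Gg q1 - Gg q2) \<le> Lg * norm (q1 - q2)"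
    and rho0: "rho \<ge> 0" and tau0: "tau \<ge> 0"
  fixes kappa :: real
  assumes cX: "convex X" and cY: "convex Y" and cL: "convex Lam"
    and kY: "compact Y" and kL: "compact Lam" and nY: "Y \<noteq> {}" and nL: "Lam \<noteq> {}"
    and kappa: "kappa > 0" and tau_ge: "tau \<ge> Lf + 2 * rho * Lg + kappa"
begin

lemma derQ_p:
  "((\<lambda>p. F ((x, fst p), snd p) - rho * (g p - g (z, snd p)) - tau / 2 * (norm (p - (u, v)))\<^sup>2)
     has_derivative (\<lambda>h. ((snd (fst (GF ((x, fst p), snd p))), snd (GF ((x, fst p), snd p)))
        - rho *\<^sub>R Gg p + rho *\<^sub>R (0, snd (Gg (z, snd p))) - tau *\<^sub>R (p - (u, v))) \<bullet> h)) (at p)"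
proof -
  have l1: "((\<lambda>p. ((x, fst p), snd p)) has_derivative (\<lambda>h. ((0, fst h), snd h))) (at p)"
    by (auto intro!: derivative_eq_intros)
  have d1: "((\<lambda>p. F ((x, fst p), snd p)) has_derivative (\<lambda>h. GF ((x, fst p), snd p) \<bullet> ((0, fst h), snd h))) (at p)"
    using has_derivative_compose[OF l1 DF] by simp
  have l2: "((\<lambda>p. (z, snd p)) has_derivative (\<lambda>h. (0, snd h))) (at p)"
    by (auto intro!: derivative_eq_intros)
  have d2: "((\<lambda>p. g (z, snd p)) has_derivative (\<lambda>h. Gg (z, snd p) \<bullet> (0, snd h))) (at p)"
    using has_derivative_compose[OF l2 Dg] by simp
  have l3: "((\<lambda>p. p - (u, v)) has_derivative (\<lambda>h. h)) (at p)"
    by (auto intro!: derivative_eq_intros)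
  have d3: "((\<lambda>p. (norm (p - (u, v)))\<^sup>2) has_derivative (\<lambda>h. 2 *\<^sub>R ((p - (u, v)) \<bullet> h))) (at p)"
    using has_derivative_compose[OF l3 has_derivative_sqnorm_at] by simp
  have "((\<lambda>p. F ((x, fst p), snd p) - rho * (g p - g (z, snd p)) - tau / 2 * (norm (p - (u, v)))\<^sup>2)
     has_derivative (\<lambda>h. GF ((x, fst p), snd p) \<bullet> ((0, fst h), snd h) - rho * (Gg p \<bullet> h - Gg (z, snd p) \<bullet> (0, snd h))
        - tau / 2 * (2 *\<^sub>R ((p - (u, v)) \<bullet> h)))) (at p)"
    by (intro has_derivative_diff has_derivative_mult_right d1 d2 d3 Dg)
  then show ?thesis
    apply (rule has_derivative_eq_rhs)
    apply (rule ext)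
    apply (cases p)
    apply (auto simp: inner_diff_left inner_add_left algebra_simps split: prod.splits)
    done
qed

lemma derQ_w:
  "((\<lambda>w. F ((fst w, y), l) - rho * (g (y, l) - g (fst (snd w), l))
        - tau / 2 * (norm ((y, l) - (fst (snd (snd w)), snd (snd (snd w)))))\<^sup>2)
     has_derivative (\<lambda>h. (fst (fst (GF ((x, y), l))), rho *\<^sub>R fst (Gg (z, l)),
        tau *\<^sub>R (y - u), tau *\<^sub>R (l - v)) \<bullet> h)) (at (x, z, u, v))"
proof -
  let ?w = "(x, z, u, v)"
  have l1: "((\<lambda>w. ((fst w, y), l)) has_derivative (\<lambda>h. ((fst h, 0), 0))) (at ?w)"
    by (auto intro!: derivative_eq_intros)
  have d1: "((\<lambda>w. F ((fst w, y), l)) has_derivative (\<lambda>h. GF ((x, y), l) \<bullet> ((fst h, 0), 0))) (at ?w)"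
    using has_derivative_compose[OF l1 DF] by simp
  have l2: "((\<lambda>w. (fst (snd w), l)) has_derivative (\<lambda>h. (fst (snd h), 0))) (at ?w)"
    by (auto intro!: derivative_eq_intros)
  have d2: "((\<lambda>w. g (fst (snd w), l)) has_derivative (\<lambda>h. Gg (z, l) \<bullet> (fst (snd h), 0))) (at ?w)"
    using has_derivative_compose[OF l2 Dg] by simp
  have l3: "((\<lambda>w. (y, l) - (fst (snd (snd w)), snd (snd (snd w)))) has_derivative
      (\<lambda>h. - (fst (snd (snd h)), snd (snd (snd h))))) (at ?w)"
    by (auto intro!: derivative_eq_intros)
  have d3: "((\<lambda>w. (norm ((y, l) - (fst (snd (snd w)), snd (snd (snd w)))))\<^sup>2) has_derivative
      (\<lambda>h. 2 *\<^sub>R (((y, l) - (u, v)) \<bullet> (- (fst (snd (snd h)), snd (snd (snd h))))))) (at ?w)"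
    using has_derivative_compose[OF l3 has_derivative_sqnorm_at] by simp
  have "((\<lambda>w. F ((fst w, y), l) - rho * (g (y, l) - g (fst (snd w), l))
        - tau / 2 * (norm ((y, l) - (fst (snd (snd w)), snd (snd (snd w)))))\<^sup>2)
     has_derivative (\<lambda>h. GF ((x, y), l) \<bullet> ((fst h, 0), 0) - rho * (0 - Gg (z, l) \<bullet> (fst (snd h), 0))
        - tau / 2 * (2 *\<^sub>R (((y, l) - (u, v)) \<bullet> (- (fst (snd (snd h)), snd (snd (snd h)))))))) (at ?w)"
    by (intro has_derivative_diff has_derivative_mult_right d1 d2 d3 has_derivative_const)
  then show ?thesis
    apply (rule has_derivative_eq_rhs)
    apply (rule ext)
    apply (auto simp: inner_diff_left inner_add_left algebra_simps split: prod.splits)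
    done
qed

lemma E1:
  assumes x: "x \<in> X" and z: "z \<in> Y" and p1: "p1 \<in> Y \<times> Lam" and p2: "p2 \<in> Y \<times> Lam"
  shows "norm (((snd (fst (GF ((x, fst p1), snd p1))), snd (GF ((x, fst p1), snd p1)))
        - rho *\<^sub>R Gg p1 + rho *\<^sub>R (0, snd (Gg (z, snd p1))))
      - ((snd (fst (GF ((x, fst p2), snd p2))), snd (GF ((x, fst p2), snd p2)))
        - rho *\<^sub>R Gg p2 + rho *\<^sub>R (0, snd (Gg (z, snd p2)))))
     \<le> (Lf + 2 * rho * Lg) * norm (p1 - p2)"
proof -
  let ?q1 = "((x, fst p1), snd p1)" and ?q2 = "((x, fst p2), snd p2)"
  let ?D = "GF ?q1 - GF ?q2" and ?E = "Gg p1 - Gg p2" and ?H = "Gg (z, snd p1) - Gg (z, snd p2)"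
  have eq: "((snd (fst (GF ?q1)), snd (GF ?q1)) - rho *\<^sub>R Gg p1 + rho *\<^sub>R (0, snd (Gg (z, snd p1))))
      - ((snd (fst (GF ?q2)), snd (GF ?q2)) - rho *\<^sub>R Gg p2 + rho *\<^sub>R (0, snd (Gg (z, snd p2))))
      = (snd (fst ?D), snd ?D) - rho *\<^sub>R ?E + rho *\<^sub>R (0, snd ?H)"
    by (simp add: algebra_simps)
  have "norm ((snd (fst ?D), snd ?D) - rho *\<^sub>R ?E + rho *\<^sub>R (0, snd ?H))
      \<le> norm (snd (fst ?D), snd ?D) + norm (rho *\<^sub>R ?E) + norm (rho *\<^sub>R ((0::real^'dy), snd ?H))"
    by (rule order_trans[OF norm_triangle_ineq add_right_mono[OF norm_triangle_ineq4]])
  also have "\<dots> \<le> norm ?D + rho * norm ?E + rho * norm ?H"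
    using norm_sndfst_snd[of ?D] norm_0_snd[of ?H] rho0
    by (simp add: mult_left_mono add_mono)
  also have "\<dots> \<le> Lf * norm (p1 - p2) + rho * (Lg * norm (p1 - p2)) + rho * (Lg * norm (p1 - p2))"
  proof -
    have "norm ?D \<le> Lf * norm (?q1 - ?q2)" using x p1 p2 by (intro LF) (auto simp: mem_Times_iff)
    also have "norm (?q1 - ?q2) = norm (p1 - p2)"
      by (cases p1; cases p2) (simp add: norm_Pair)
    finally have a: "norm ?D \<le> Lf * norm (p1 - p2)" .
    have b: "norm ?E \<le> Lg * norm (p1 - p2)" using LG p1 p2 by auto
    have "norm ?H \<le> Lg * norm ((z, snd p1) - (z, snd p2))" using z p1 p2 by (intro LG) (auto simp: mem_Times_iff)
    also have "norm ((z, snd p1) - (z, snd p2)) \<le> norm (p1 - p2)"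
      by (cases p1; cases p2) (simp add: norm_Pair norm_snd_le)
    finally have c: "norm ?H \<le> Lg * norm (p1 - p2)" using Lg0 by (simp add: mult_left_mono order_trans)
    show ?thesis using a b c rho0 by (intro add_mono mult_left_mono) auto
  qed
  finally show ?thesis unfolding eq by (simp add: algebra_simps)
qed

lemma E2:
  assumes x1: "x1 \<in> X" and x2: "x2 \<in> X" and z1: "z1 \<in> Y" and z2: "z2 \<in> Y" and p: "p \<in> Y \<times> Lam"
  shows "norm (((snd (fst (GF ((x1, fst p), snd p))), snd (GF ((x1, fst p), snd p)))
        - rho *\<^sub>R Gg p + rho *\<^sub>R (0, snd (Gg (z1, snd p))))
      - ((snd (fst (GF ((x2, fst p), snd p))), snd (GF ((x2, fst p), snd p)))
        - rho *\<^sub>R Gg p + rho *\<^sub>R (0, snd (Gg (z2, snd p)))))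
     \<le> Lf * norm (x1 - x2) + rho * Lg * norm (z1 - z2)"
proof -
  let ?q1 = "((x1, fst p), snd p)" and ?q2 = "((x2, fst p), snd p)"
  let ?D = "GF ?q1 - GF ?q2" and ?H = "Gg (z1, snd p) - Gg (z2, snd p)"
  have eq: "((snd (fst (GF ?q1)), snd (GF ?q1)) - rho *\<^sub>R Gg p + rho *\<^sub>R (0, snd (Gg (z1, snd p))))
      - ((snd (fst (GF ?q2)), snd (GF ?q2)) - rho *\<^sub>R Gg p + rho *\<^sub>R (0, snd (Gg (z2, snd p))))
      = (snd (fst ?D), snd ?D) + rho *\<^sub>R ((0::real^'dy), snd ?H)"
    by (simp add: algebra_simps)
  have "norm ((snd (fst ?D), snd ?D) + rho *\<^sub>R ((0::real^'dy), snd ?H))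
      \<le> norm (snd (fst ?D), snd ?D) + norm (rho *\<^sub>R ((0::real^'dy), snd ?H))"
    by (rule norm_triangle_ineq)
  also have "\<dots> \<le> norm ?D + rho * norm ?H"
    using norm_sndfst_snd[of ?D] norm_0_snd[of ?H] rho0
    by (simp add: mult_left_mono add_mono)
  also have "\<dots> \<le> Lf * norm (x1 - x2) + rho * (Lg * norm (z1 - z2))"
  proof -
    have "norm ?D \<le> Lf * norm (?q1 - ?q2)" using x1 x2 p by (intro LF) (auto simp: mem_Times_iff)
    also have "norm (?q1 - ?q2) = norm (x1 - x2)"
      by (simp add: norm_Pair)
    finally have a: "norm ?D \<le> Lf * norm (x1 - x2)" .
    have "norm ?H \<le> Lg * norm ((z1, snd p) - (z2, snd p))" using z1 z2 p by (intro LG) (auto simp: mem_Times_iff)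
    also have "norm ((z1, snd p) - (z2, snd p)) = norm (z1 - z2)"
      by (simp add: norm_Pair)
    finally have c: "norm ?H \<le> Lg * norm (z1 - z2)" .
    show ?thesis using a c rho0 by (intro add_mono mult_left_mono) auto
  qed
  finally show ?thesis unfolding eq by (simp add: algebra_simps)
qed

lemma E3:
  assumes x1: "x1 \<in> X" and x2: "x2 \<in> X" and z1: "z1 \<in> Y" and z2: "z2 \<in> Y"
    and p1: "p1 \<in> Y \<times> Lam" and p2: "p2 \<in> Y \<times> Lam"
  shows "norm ((fst (fst (GF ((x1, fst p1), snd p1))), rho *\<^sub>R fst (Gg (z1, snd p1)),
                 tau *\<^sub>R (fst p1 - u1), tau *\<^sub>R (snd p1 - v1))
             - (fst (fst (GF ((x2, fst p2), snd p2))), rho *\<^sub>R fst (Gg (z2, snd p2)),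
                 tau *\<^sub>R (fst p2 - u2), tau *\<^sub>R (snd p2 - v2)))
     \<le> (Lf + rho * Lg + tau) * (norm ((x1, z1, u1, v1) - (x2, z2, u2, v2)) + norm (p1 - p2))"
proof -
  let ?q1 = "((x1, fst p1), snd p1)" and ?q2 = "((x2, fst p2), snd p2)"
  let ?D = "GF ?q1 - GF ?q2" and ?H = "Gg (z1, snd p1) - Gg (z2, snd p2)"
  let ?nw = "norm ((x1, z1, u1, v1) - (x2, z2, u2, v2))" and ?np = "norm (p1 - p2)"
  have nx: "norm (x1 - x2) \<le> ?nw" by (simp add: norm_fst_le)
  have nz: "norm (z1 - z2) \<le> ?nw"
    using norm_fst_le[of "z1 - z2" "(u1 - u2, v1 - v2)"] norm_snd_le[of "(z1 - z2, u1 - u2, v1 - v2)" "x1 - x2"]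
    by simp
  have nuv: "norm (u1 - u2, v1 - v2) \<le> ?nw"
    using norm_snd_le[of "(u1 - u2, v1 - v2)" "z1 - z2"] norm_snd_le[of "(z1 - z2, u1 - u2, v1 - v2)" "x1 - x2"]
    by simp
  have eq: "(fst (fst (GF ?q1)), rho *\<^sub>R fst (Gg (z1, snd p1)),
                 tau *\<^sub>R (fst p1 - u1), tau *\<^sub>R (snd p1 - v1))
             - (fst (fst (GF ?q2)), rho *\<^sub>R fst (Gg (z2, snd p2)),
                 tau *\<^sub>R (fst p2 - u2), tau *\<^sub>R (snd p2 - v2))
       = (fst (fst ?D), rho *\<^sub>R fst ?H, tau *\<^sub>R ((p1 - p2) - (u1 - u2, v1 - v2)))"
    by (cases p1; cases p2) (simp add: algebra_simps)
  have "norm (fst (fst ?D), rho *\<^sub>R fst ?H, tau *\<^sub>R ((p1 - p2) - (u1 - u2, v1 - v2)))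
     \<le> norm (fst (fst ?D)) + (norm (rho *\<^sub>R fst ?H) + norm (tau *\<^sub>R ((p1 - p2) - (u1 - u2, v1 - v2))))"
    by (rule order_trans[OF norm_Pair_le add_left_mono[OF norm_Pair_le]])
  also have "\<dots> \<le> norm ?D + (rho * norm ?H + tau * (?np + ?nw))"
  proof -
    have "norm ((p1 - p2) - (u1 - u2, v1 - v2)) \<le> ?np + norm (u1 - u2, v1 - v2)"
      by (rule norm_triangle_ineq4)
    then have "norm ((p1 - p2) - (u1 - u2, v1 - v2)) \<le> ?np + ?nw" using nuv by linarith
    then have t: "tau * norm ((p1 - p2) - (u1 - u2, v1 - v2)) \<le> tau * (?np + ?nw)"
      using tau0 by (rule mult_left_mono)
    have r: "rho * norm (fst ?H) \<le> rho * norm ?H" using rho0 norm_fst_le' by (intro mult_left_mono)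
    show ?thesis using t r norm_fstfst[of ?D] rho0 tau0 by simp
  qed
  also have "\<dots> \<le> Lf * (?nw + ?np) + (rho * (Lg * (?nw + ?np)) + tau * (?np + ?nw))"
  proof -
    have "norm ?D \<le> Lf * norm (?q1 - ?q2)" using x1 x2 p1 p2 by (intro LF) (auto simp: mem_Times_iff)
    also have "norm (?q1 - ?q2) \<le> norm (x1 - x2) + norm (p1 - p2)"
      using norm_assoc_le[of "x1 - x2" "fst p1 - fst p2" "snd p1 - snd p2"]
      by (cases p1; cases p2) simp
    finally have a: "norm ?D \<le> Lf * (?nw + ?np)" using nx Lf0
      by (meson add_right_mono mult_left_mono order_trans)
    have "norm ?H \<le> Lg * norm ((z1, snd p1) - (z2, snd p2))" using z1 z2 p1 p2 by (intro LG) (auto simp: mem_Times_iff)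
    also have "norm ((z1, snd p1) - (z2, snd p2)) \<le> norm (z1 - z2) + norm (p1 - p2)"
      using norm_Pair_le[of "z1 - z2" "snd p1 - snd p2"] norm_snd_le'[of "p1 - p2"] by simp
    finally have c: "norm ?H \<le> Lg * (?nw + ?np)" using nz Lg0
      by (meson add_right_mono mult_left_mono order_trans)
    show ?thesis using a c rho0 tau0 by (intro add_mono mult_left_mono) auto
  qed
  finally show ?thesis unfolding eq by (simp add: algebra_simps)
qed

abbreviation "Sset \<equiv> Y \<times> Lam"
abbreviation "Dset \<equiv> X \<times> Y \<times> (UNIV::(real^'dy) set) \<times> (UNIV::(real^'dl) set)"

lemma derQQ_p: "((\<lambda>p. QQ F g rho tau w p) has_derivative (\<lambda>h. dQ GF Gg rho tau w p \<bullet> h)) (at p)"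
proof -
  obtain x z u v where w: "w = (x, z, u, v)" by (cases w) auto
  show ?thesis using derQ_p[of x z u v p] unfolding QQ_def dQ_def PP_def w by simp
qed

lemma derQQ_w: "((\<lambda>w. QQ F g rho tau w p) has_derivative (\<lambda>h. GW GF Gg rho tau w p \<bullet> h)) (at w)"
proof -
  obtain x z u v where w: "w = (x, z, u, v)" by (cases w) auto
  have e: "(\<lambda>w. QQ F g rho tau w p) = (\<lambda>w. F ((fst w, fst p), snd p) - rho * (g (fst p, snd p) - g (fst (snd w), snd p))
        - tau / 2 * (norm ((fst p, snd p) - (fst (snd (snd w)), snd (snd (snd w)))))\<^sup>2)"
    by (auto simp: QQ_def fun_eq_iff split: prod.splits)
  show ?thesis unfolding e w GW_def
    using derQ_w[of "fst p" "snd p" x z u v] by simp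
qed

lemma cont_QQ: "continuous_on A (QQ F g rho tau w)"
proof (rule has_derivative_continuous_on)
  fix p show "(QQ F g rho tau w has_derivative (\<lambda>h. dQ GF Gg rho tau w p \<bullet> h)) (at p within A)"
    using has_derivative_at_withinI[OF derQQ_p] by simp
qed

lemma exists_max: "\<exists>p\<in>Sset. \<forall>q\<in>Sset. QQ F g rho tau w q \<le> QQ F g rho tau w p"
  using continuous_attains_sup[of Sset "QQ F g rho tau w"] cont_QQ kY kL nY nL
  by (simp add: compact_Times)

definition "pstar w = (SOME p. p \<in> Sset \<and> (\<forall>q\<in>Sset. QQ F g rho tau w q \<le> QQ F g rho tau w p))"

lemma pstar: "pstar w \<in> Sset" "\<And>q. q \<in> Sset \<Longrightarrow> QQ F g rho tau w q \<le> QQ F g rho tau w (pstar w)"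
proof -
  have "pstar w \<in> Sset \<and> (\<forall>q\<in>Sset. QQ F g rho tau w q \<le> QQ F g rho tau w (pstar w))"
    unfolding pstar_def by (rule someI_ex) (use exists_max in blast)
  then show "pstar w \<in> Sset" "\<And>q. q \<in> Sset \<Longrightarrow> QQ F g rho tau w q \<le> QQ F g rho tau w (pstar w)" by auto
qed

lemma dQ_lip:
  assumes w: "w \<in> Dset" and p1: "p1 \<in> Sset" and p2: "p2 \<in> Sset"
  shows "norm (dQ GF Gg rho tau w p1 - dQ GF Gg rho tau w p2) \<le> (Lf + 2 * rho * Lg + tau) * norm (p1 - p2)"
proof -
  obtain x z u v where wd: "w = (x, z, u, v)" and x: "x \<in> X" and z: "z \<in> Y" using w by auto
  have "dQ GF Gg rho tau w p1 - dQ GF Gg rho tau w p2 = (PP GF Gg rho x z p1 - PP GF Gg rho x z p2) - tau *\<^sub>R (p1 - p2)"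
    by (simp add: dQ_def wd algebra_simps)
  also have "norm \<dots> \<le> norm (PP GF Gg rho x z p1 - PP GF Gg rho x z p2) + norm (tau *\<^sub>R (p1 - p2))"
    by (rule norm_triangle_ineq4)
  also have "\<dots> \<le> (Lf + 2 * rho * Lg) * norm (p1 - p2) + tau * norm (p1 - p2)"
    using E1[OF x z p1 p2] tau0 unfolding PP_def by simp
  finally show ?thesis by (simp add: algebra_simps)
qed

lemma dQ_mono:
  assumes w: "w \<in> Dset" and p1: "p1 \<in> Sset" and p2: "p2 \<in> Sset"
  shows "(dQ GF Gg rho tau w p1 - dQ GF Gg rho tau w p2) \<bullet> (p1 - p2) \<le> - kappa * (norm (p1 - p2))\<^sup>2"
proof -
  obtain x z u v where wd: "w = (x, z, u, v)" and x: "x \<in> X" and z: "z \<in> Y" using w by auto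
  let ?d = "norm (p1 - p2)" and ?A = "(PP GF Gg rho x z p1 - PP GF Gg rho x z p2) \<bullet> (p1 - p2)"
  have eq: "(dQ GF Gg rho tau w p1 - dQ GF Gg rho tau w p2) \<bullet> (p1 - p2) = ?A - tau * ?d\<^sup>2"
    by (simp add: dQ_def wd algebra_simps inner_diff_left power2_norm_eq_inner)
  have "?A \<le> norm (PP GF Gg rho x z p1 - PP GF Gg rho x z p2) * ?d"
    by (rule Cauchy_Schwarz_ineq2[THEN order_trans[OF abs_ge_self]])
  also have "\<dots> \<le> (Lf + 2 * rho * Lg) * ?d * ?d"
    using E1[OF x z p1 p2] unfolding PP_def by (simp add: mult_right_mono)
  finally have A: "?A \<le> (Lf + 2 * rho * Lg) * ?d\<^sup>2" by (simp add: power2_eq_square mult.assoc)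
  have "(Lf + 2 * rho * Lg - tau) * ?d\<^sup>2 \<le> (- kappa) * ?d\<^sup>2"
    using tau_ge by (intro mult_right_mono) auto
  then show ?thesis unfolding eq using A by (simp add: algebra_simps)
qed

lemma convS: "convex Sset" using cY cL by (simp add: convex_Times)
lemma convD: "convex Dset" using cX cY by (simp add: convex_Times)

lemma VI:
  assumes w: "w \<in> Dset" and p: "p \<in> Sset" and mx: "\<And>q. q \<in> Sset \<Longrightarrow> QQ F g rho tau w q \<le> QQ F g rho tau w p"
    and q: "q \<in> Sset"
  shows "dQ GF Gg rho tau w p \<bullet> (q - p) \<le> 0"
proof (rule foc[OF convS derQQ_p dQ_lip[OF w] _ p q mx])
  show "0 \<le> Lf + 2 * rho * Lg + tau" using Lf0 Lg0 rho0 tau0 by simp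
qed auto

lemma unique_max:
  assumes w: "w \<in> Dset" and p: "p \<in> Sset" and mx: "\<And>q. q \<in> Sset \<Longrightarrow> QQ F g rho tau w q \<le> QQ F g rho tau w p"
  shows "p = pstar w"
proof -
  let ?p' = "pstar w"
  have a: "dQ GF Gg rho tau w p \<bullet> (?p' - p) \<le> 0" using VI[OF w p mx pstar(1)] .
  have b: "dQ GF Gg rho tau w ?p' \<bullet> (p - ?p') \<le> 0" using VI[OF w pstar(1) pstar(2) p] .
  have c: "(dQ GF Gg rho tau w p - dQ GF Gg rho tau w ?p') \<bullet> (p - ?p') \<le> - kappa * (norm (p - ?p'))\<^sup>2"
    using dQ_mono[OF w p pstar(1)] .
  have "(dQ GF Gg rho tau w p - dQ GF Gg rho tau w ?p') \<bullet> (p - ?p')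
      = - (dQ GF Gg rho tau w p \<bullet> (?p' - p)) - dQ GF Gg rho tau w ?p' \<bullet> (p - ?p')"
    by (simp add: inner_diff_left inner_diff_right)
  then have "0 \<le> - kappa * (norm (p - ?p'))\<^sup>2" using a b c by linarith
  then have "(norm (p - ?p'))\<^sup>2 \<le> 0" using kappa by (simp add: mult_le_0_iff)
  then show ?thesis by simp
qed

lemma pstar_lip:
  assumes w1: "w1 \<in> Dset" and w2: "w2 \<in> Dset"
  shows "norm (pstar w1 - pstar w2) \<le> (Lf + 2 * rho * Lg + tau) / kappa * norm (w1 - w2)"
proof -
  obtain x1 z1 u1 v1 where wd1: "w1 = (x1, z1, u1, v1)" and x1: "x1 \<in> X" and z1: "z1 \<in> Y" using w1 by auto
  obtain x2 z2 u2 v2 where wd2: "w2 = (x2, z2, u2, v2)" and x2: "x2 \<in> X" and z2: "z2 \<in> Y" using w2 by auto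
  let ?p1 = "pstar w1" and ?p2 = "pstar w2"
  let ?d = "norm (?p1 - ?p2)" and ?C = "Lf + 2 * rho * Lg + tau"
  have a: "dQ GF Gg rho tau w1 ?p1 \<bullet> (?p2 - ?p1) \<le> 0" using VI[OF w1 pstar(1) pstar(2) pstar(1)] .
  have b: "dQ GF Gg rho tau w2 ?p2 \<bullet> (?p1 - ?p2) \<le> 0" using VI[OF w2 pstar(1) pstar(2) pstar(1)] .
  have c: "(dQ GF Gg rho tau w1 ?p1 - dQ GF Gg rho tau w1 ?p2) \<bullet> (?p1 - ?p2) \<le> - kappa * ?d\<^sup>2"
    using dQ_mono[OF w1 pstar(1) pstar(1)] .
  have e: "(dQ GF Gg rho tau w1 ?p2 - dQ GF Gg rho tau w2 ?p2) \<bullet> (?p1 - ?p2)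
     = - ((dQ GF Gg rho tau w1 ?p1 - dQ GF Gg rho tau w1 ?p2) \<bullet> (?p1 - ?p2))
       - dQ GF Gg rho tau w1 ?p1 \<bullet> (?p2 - ?p1) - dQ GF Gg rho tau w2 ?p2 \<bullet> (?p1 - ?p2)"
    by (simp add: inner_diff_left inner_diff_right algebra_simps)
  have "kappa * ?d\<^sup>2 \<le> (dQ GF Gg rho tau w1 ?p2 - dQ GF Gg rho tau w2 ?p2) \<bullet> (?p1 - ?p2)"
    using a b c e by linarith
  also have "\<dots> \<le> norm (dQ GF Gg rho tau w1 ?p2 - dQ GF Gg rho tau w2 ?p2) * ?d"
    by (rule Cauchy_Schwarz_ineq2[THEN order_trans[OF abs_ge_self]])
  also have "norm (dQ GF Gg rho tau w1 ?p2 - dQ GF Gg rho tau w2 ?p2) \<le> ?C * norm (w1 - w2)"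
  proof -
    have "dQ GF Gg rho tau w1 ?p2 - dQ GF Gg rho tau w2 ?p2
        = (PP GF Gg rho x1 z1 ?p2 - PP GF Gg rho x2 z2 ?p2) + tau *\<^sub>R ((u1, v1) - (u2, v2))"
      by (simp add: dQ_def wd1 wd2 algebra_simps)
    also have "norm \<dots> \<le> norm (PP GF Gg rho x1 z1 ?p2 - PP GF Gg rho x2 z2 ?p2) + norm (tau *\<^sub>R ((u1, v1) - (u2, v2)))"
      by (rule norm_triangle_ineq)
    also have "\<dots> \<le> (Lf * norm (x1 - x2) + rho * Lg * norm (z1 - z2)) + tau * norm ((u1, v1) - (u2, v2))"
    proof -
      have a: "norm (PP GF Gg rho x1 z1 ?p2 - PP GF Gg rho x2 z2 ?p2) \<le> Lf * norm (x1 - x2) + rho * Lg * norm (z1 - z2)"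
        unfolding PP_def by (rule E2[OF x1 x2 z1 z2 pstar(1)[of w2]])
      have b: "norm (tau *\<^sub>R ((u1, v1) - (u2, v2))) = tau * norm ((u1, v1) - (u2, v2))"
        using tau0 by (simp only: norm_scaleR abs_of_nonneg)
      show ?thesis using a b by linarith
    qed
    also have "\<dots> \<le> (Lf * norm (w1 - w2) + rho * Lg * norm (w1 - w2)) + tau * norm (w1 - w2)"
    proof -
      have nx: "norm (x1 - x2) \<le> norm (w1 - w2)" by (simp add: wd1 wd2 norm_fst_le)
      have nz: "norm (z1 - z2) \<le> norm (w1 - w2)"
        using norm_fst_le[of "z1 - z2" "(u1 - u2, v1 - v2)"] norm_snd_le[of "(z1 - z2, u1 - u2, v1 - v2)" "x1 - x2"]
        by (simp add: wd1 wd2)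
      have nuv: "norm ((u1, v1) - (u2, v2)) \<le> norm (w1 - w2)"
        using norm_snd_le[of "(u1 - u2, v1 - v2)" "z1 - z2"] norm_snd_le[of "(z1 - z2, u1 - u2, v1 - v2)" "x1 - x2"]
        by (simp add: wd1 wd2)
      have "0 \<le> rho * Lg" using rho0 Lg0 by simp
      then show ?thesis using nx nz nuv Lf0 tau0
        by (intro add_mono mult_left_mono) auto
    qed
    also have "\<dots> \<le> ?C * norm (w1 - w2)"
      using rho0 Lg0 by (simp add: algebra_simps mult_right_mono)
    finally show ?thesis .
  qed
  then have "norm (dQ GF Gg rho tau w1 ?p2 - dQ GF Gg rho tau w2 ?p2) * ?d \<le> ?C * norm (w1 - w2) * ?d"
    by (simp add: mult_right_mono)
  finally have k: "kappa * ?d\<^sup>2 \<le> ?C * norm (w1 - w2) * ?d" .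
  show ?thesis
  proof (cases "?d = 0")
    case True
    have "0 \<le> ?C / kappa * norm (w1 - w2)" using Lf0 Lg0 rho0 tau0 kappa by simp
    then show ?thesis using True by simp
  next
    case False
    then have "?d > 0" by simp
    have "(kappa * ?d) * ?d \<le> (?C * norm (w1 - w2)) * ?d" using k by (simp add: power2_eq_square mult.assoc)
    then have "kappa * ?d \<le> ?C * norm (w1 - w2)" using \<open>?d > 0\<close> by (rule mult_right_le_imp_le)
    then show ?thesis using kappa by (simp add: field_simps)
  qed
qed

lemma GW_lip:
  assumes w1: "w1 \<in> Dset" and w2: "w2 \<in> Dset" and p1: "p1 \<in> Sset" and p2: "p2 \<in> Sset"
  shows "norm (GW GF Gg rho tau w1 p1 - GW GF Gg rho tau w2 p2) \<le> (Lf + rho * Lg + tau) * (norm (w1 - w2) + norm (p1 - p2))"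
proof -
  obtain x1 z1 u1 v1 where wd1: "w1 = (x1, z1, u1, v1)" and x1: "x1 \<in> X" and z1: "z1 \<in> Y" using w1 by auto
  obtain x2 z2 u2 v2 where wd2: "w2 = (x2, z2, u2, v2)" and x2: "x2 \<in> X" and z2: "z2 \<in> Y" using w2 by auto
  show ?thesis using E3[OF x1 x2 z1 z2 p1 p2, of u1 v1 u2 v2] unfolding GW_def wd1 wd2 by simp
qed

lemma quad_w:
  assumes w: "w \<in> Dset" and w': "w' \<in> Dset" and p: "p \<in> Sset"
  shows "\<bar>QQ F g rho tau w' p - QQ F g rho tau w p - GW GF Gg rho tau w p \<bullet> (w' - w)\<bar>
     \<le> (Lf + rho * Lg + tau) * (norm (w' - w))\<^sup>2"
proof (rule quad_bound[OF convD derQQ_w _ _ w w'])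
  show "0 \<le> Lf + rho * Lg + tau" using Lf0 Lg0 rho0 tau0 by simp
  fix q1 q2 assume "q1 \<in> Dset" "q2 \<in> Dset"
  then show "norm (GW GF Gg rho tau q1 p - GW GF Gg rho tau q2 p) \<le> (Lf + rho * Lg + tau) * norm (q1 - q2)"
    using GW_lip[of q1 q2 p p] p by simp
qed

definition "thetaQ w = QQ F g rho tau w (pstar w)"

lemma theta_quad:
  assumes w: "w \<in> Dset" and w': "w' \<in> Dset"
  shows "\<bar>thetaQ w' - thetaQ w - GW GF Gg rho tau w (pstar w) \<bullet> (w' - w)\<bar>
     \<le> ((Lf + rho * Lg + tau) + (Lf + rho * Lg + tau) * ((Lf + 2 * rho * Lg + tau) / kappa)) * (norm (w' - w))\<^sup>2"
proof -
  let ?L = "Lf + rho * Lg + tau" and ?K = "(Lf + 2 * rho * Lg + tau) / kappa"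
  let ?p = "pstar w" and ?p' = "pstar w'" and ?h = "w' - w"
  let ?G = "GW GF Gg rho tau w ?p" and ?G' = "GW GF Gg rho tau w ?p'"
  have L0: "?L \<ge> 0" using Lf0 Lg0 rho0 tau0 by simp
  have K0: "?K \<ge> 0" using Lf0 Lg0 rho0 tau0 kappa by simp
  have lo1: "thetaQ w' \<ge> QQ F g rho tau w' ?p" unfolding thetaQ_def by (rule pstar(2)[OF pstar(1)])
  have lo2: "QQ F g rho tau w' ?p - QQ F g rho tau w ?p - ?G \<bullet> ?h \<ge> - (?L * (norm ?h)\<^sup>2)"
    using quad_w[OF w w' pstar(1)[of w]] by linarith
  have up1: "QQ F g rho tau w ?p' \<le> thetaQ w" unfolding thetaQ_def by (rule pstar(2)[OF pstar(1)])
  have up2: "QQ F g rho tau w' ?p' - QQ F g rho tau w ?p' - ?G' \<bullet> ?h \<le> ?L * (norm ?h)\<^sup>2"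
    using quad_w[OF w w' pstar(1)[of w']] by linarith
  have up3: "(?G' - ?G) \<bullet> ?h \<le> ?L * ?K * (norm ?h)\<^sup>2"
  proof -
    have "(?G' - ?G) \<bullet> ?h \<le> norm (?G' - ?G) * norm ?h"
      by (rule Cauchy_Schwarz_ineq2[THEN order_trans[OF abs_ge_self]])
    also have "norm (?G' - ?G) \<le> ?L * (norm (w - w) + norm (?p' - ?p))"
      using GW_lip[OF w w pstar(1) pstar(1)] by simp
    also have "\<dots> \<le> ?L * (?K * norm ?h)"
    proof -
      have "norm (?p' - ?p) \<le> ?K * norm ?h" using pstar_lip[OF w' w] .
      from mult_left_mono[OF this L0] show ?thesis by simp
    qed
    finally have "(?G' - ?G) \<bullet> ?h \<le> ?L * (?K * norm ?h) * norm ?h"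
      by (simp add: mult_right_mono)
    then show ?thesis by (simp add: power2_eq_square algebra_simps)
  qed
  have e: "?G' \<bullet> ?h = ?G \<bullet> ?h + (?G' - ?G) \<bullet> ?h" by (simp add: inner_diff_left)
  have t1: "thetaQ w' = QQ F g rho tau w' ?p'" by (simp add: thetaQ_def)
  have t2: "thetaQ w = QQ F g rho tau w ?p" by (simp add: thetaQ_def)
  have "0 \<le> ?L * (norm ?h)\<^sup>2" using L0 by simp
  have "0 \<le> ?L * ?K * (norm ?h)\<^sup>2" using L0 K0 by (intro mult_nonneg_nonneg zero_le_power2)
  have dist: "(?L + ?L * ?K) * (norm ?h)\<^sup>2 = ?L * (norm ?h)\<^sup>2 + ?L * ?K * (norm ?h)\<^sup>2"
    by (simp add: algebra_simps)
  have "thetaQ w' - thetaQ w - ?G \<bullet> ?h \<le> ?L * (norm ?h)\<^sup>2 + ?L * ?K * (norm ?h)\<^sup>2"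
    using up1 up2 up3 e t1 by linarith
  moreover have "thetaQ w' - thetaQ w - ?G \<bullet> ?h \<ge> - (?L * (norm ?h)\<^sup>2 + ?L * ?K * (norm ?h)\<^sup>2)"
    using lo1 lo2 t2 \<open>0 \<le> ?L * ?K * (norm ?h)\<^sup>2\<close> by linarith
  ultimately show ?thesis unfolding dist abs_le_iff by linarith
qed

lemma theta_deriv:
  assumes w: "w \<in> Dset"
  shows "(thetaQ has_derivative (\<lambda>h. GW GF Gg rho tau w (pstar w) \<bullet> h)) (at w within Dset)"
  using theta_quad[OF w] by (intro deriv_from_quad) auto

lemma G_lip:
  assumes w1: "w1 \<in> Dset" and w2: "w2 \<in> Dset"
  shows "norm (GW GF Gg rho tau w1 (pstar w1) - GW GF Gg rho tau w2 (pstar w2))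
     \<le> (Lf + rho * Lg + 2 * tau) * (1 + (Lf + 2 * rho * Lg + tau) / kappa) * norm (w1 - w2)"
proof -
  let ?L = "Lf + rho * Lg + tau" and ?K = "(Lf + 2 * rho * Lg + tau) / kappa"
  have L0: "?L \<ge> 0" using Lf0 Lg0 rho0 tau0 by simp
  have K0: "?K \<ge> 0" using Lf0 Lg0 rho0 tau0 kappa by simp
  have "norm (GW GF Gg rho tau w1 (pstar w1) - GW GF Gg rho tau w2 (pstar w2))
      \<le> ?L * (norm (w1 - w2) + norm (pstar w1 - pstar w2))"
    by (rule GW_lip[OF w1 w2 pstar(1) pstar(1)])
  also have "\<dots> \<le> ?L * (norm (w1 - w2) + ?K * norm (w1 - w2))"
    using pstar_lip[OF w1 w2] L0 by (intro mult_left_mono add_left_mono) auto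
  also have "\<dots> = ?L * (1 + ?K) * norm (w1 - w2)" by (simp add: algebra_simps)
  also have "\<dots> \<le> (Lf + rho * Lg + 2 * tau) * (1 + ?K) * norm (w1 - w2)"
    using tau0 K0 by (intro mult_right_mono) auto
  finally show ?thesis .
qed

end

lemma grad_partial1:
  assumes DF: "\<And>q. (F has_derivative (\<lambda>h. GF q \<bullet> h)) (at q)"
  shows "grad (\<lambda>x'. F ((x', y), l)) x = fst (fst (GF ((x, y), l)))"
proof (rule grad_eq)
  have l1: "((\<lambda>x'. ((x', y), l)) has_derivative (\<lambda>h. ((h, 0), 0))) (at x)"
    by (auto intro!: derivative_eq_intros)
  show "((\<lambda>x'. F ((x', y), l)) has_derivative (\<lambda>h. fst (fst (GF ((x, y), l))) \<bullet> h)) (at x)"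
    using has_derivative_compose[OF l1 DF] by simp
qed

lemma grad_partial2:
  assumes Dg: "\<And>q. (g has_derivative (\<lambda>h. Gg q \<bullet> h)) (at q)"
  shows "grad (\<lambda>z'. g (z', l)) z = fst (Gg (z, l))"
proof (rule grad_eq)
  have l1: "((\<lambda>z'. (z', l)) has_derivative (\<lambda>h. (h, 0))) (at z)"
    by (auto intro!: derivative_eq_intros)
  show "((\<lambda>z'. g (z', l)) has_derivative (\<lambda>h. fst (Gg (z, l)) \<bullet> h)) (at z)"
    using has_derivative_compose[OF l1 Dg] by simp
qed



lemma ffun_alt: "ffun fbar A B c = (\<lambda>q. fbar (fst q) + snd q \<bullet> (A *v fst (fst q) + B *v snd (fst q) - c))"
  by (auto simp: ffun_def fun_eq_iff split: prod.splits)

lemma ffun_diff: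
  assumes "\<forall>p. fbar differentiable (at p)"
  shows "ffun fbar A B c differentiable (at q)"
proof -
  have d1: "(\<lambda>q. fbar (fst q)) differentiable (at q)"
    using assms by (intro differentiable_compose[of fbar fst q]) (blast, auto intro: bounded_linear_imp_differentiable bounded_linear_fst)
  have d2: "(\<lambda>q. snd q \<bullet> (A *v fst (fst q) + B *v snd (fst q) - c)) differentiable (at q)"
    by (intro differentiable_inner differentiable_add differentiable_diff differentiable_const
      bounded_linear_imp_differentiable bounded_linear_snd bounded_linear_compose[OF matrix_vector_mul_bounded_linear]
      bounded_linear_compose[OF bounded_linear_fst] bounded_linear_compose[OF bounded_linear_snd]
      bounded_linear_fst bounded_linear_snd bounded_linear_ident)
  show ?thesis unfolding ffun_alt by (rule differentiable_add[OF d1 d2])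
qed

theorem mainTheorem4:
  fixes X :: "(real^'dx) set" and Y :: "(real^'dy) set" and Lam :: "(real^'dl) set"
    and fbar :: "(real^'dx) \<times> (real^'dy) \<Rightarrow> real"
    and A :: "(real^'dx^'dl)" and B :: "(real^'dy^'dl)" and c :: "(real^'dl)"
    and g :: "(real^'dy) \<times> (real^'dl) \<Rightarrow> real"
    and Lf Lg rho kappa tau :: real
  assumes X: "convex X" "compact X" "X \<noteq> {}"
    and Y: "convex Y" "compact Y" "Y \<noteq> {}"
    and Lam: "convex Lam" "compact Lam" "Lam \<noteq> {}"
    and fbar_C1: "\<forall>p. fbar differentiable (at p)" "continuous_on UNIV (grad fbar)"
    and Lf_pos: "Lf > 0"
    and Lf_lip: "Lf-lipschitz_on ((X \<times> Y) \<times> Lam) (grad (ffun fbar A B c))"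
    and g_C1: "\<forall>p. g differentiable (at p)" "continuous_on UNIV (grad g)"
    and Lg_lip: "Lg-lipschitz_on (Y \<times> Lam) (grad g)"
    and g_convex: "\<forall>l\<in>Lam. convex_on UNIV (\<lambda>y. g (y, l))"
    and saddle: "\<exists>zs\<in>Y. \<exists>ls\<in>Lam.
                   g (zs, ls) = (SUP l\<in>Lam. INF z\<in>Y. g (z, l)) \<and>
                   g (zs, ls) = (INF z\<in>Y. SUP l\<in>Lam. g (z, l))"
    and rho_pos: "rho > 0"
    and kappa_pos: "kappa > 0"
    and tau_ge: "tau \<ge> (Lf + 2 * rho * Lg) + kappa"
  shows "\<exists>ys ls.
     (\<forall>w \<in> X \<times> Y \<times> (UNIV::(real^'dy) set) \<times> (UNIV::(real^'dl) set).
        case w of (x, z, u, v) \<Rightarrow>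
          (ys w, ls w) \<in> Y \<times> Lam \<and>
          (\<forall>p\<in>Y \<times> Lam. Qfun fbar A B c g rho tau x z u v (fst p) (snd p)
                          \<le> Qfun fbar A B c g rho tau x z u v (ys w) (ls w)) \<and>
          (\<forall>p\<in>Y \<times> Lam.
             (\<forall>q\<in>Y \<times> Lam. Qfun fbar A B c g rho tau x z u v (fst q) (snd q)
                            \<le> Qfun fbar A B c g rho tau x z u v (fst p) (snd p))
             \<longrightarrow> p = (ys w, ls w))) \<and>
     (\<forall>w1 \<in> X \<times> Y \<times> (UNIV::(real^'dy) set) \<times> (UNIV::(real^'dl) set).
      \<forall>w2 \<in> X \<times> Y \<times> (UNIV::(real^'dy) set) \<times> (UNIV::(real^'dl) set).
        norm ((ys w1, ls w1) - (ys w2, ls w2))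
          \<le> ((Lf + 2 * rho * Lg) + tau) / kappa * norm (w1 - w2)) \<and>
     (let D = X \<times> Y \<times> (UNIV::(real^'dy) set) \<times> (UNIV::(real^'dl) set);
          G = (\<lambda>(x, z, u, v).
                 (grad (\<lambda>x'. ffun fbar A B c ((x', ys (x, z, u, v)), ls (x, z, u, v))) x,
                  rho *\<^sub>R grad (\<lambda>z'. g (z', ls (x, z, u, v))) z,
                  tau *\<^sub>R (ys (x, z, u, v) - u),
                  tau *\<^sub>R (ls (x, z, u, v) - v)));
          Lth = (Lf + rho * Lg + 2 * tau) * (1 + ((Lf + 2 * rho * Lg) + tau) / kappa)
      in (\<forall>w\<in>D. (theta fbar A B c g rho tau Y Lam has_derivative (\<lambda>h. G w \<bullet> h)) (at w within D)) \<and>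
         continuous_on D G \<and>
         (\<forall>w1\<in>D. \<forall>w2\<in>D. norm (G w1 - G w2) \<le> Lth * norm (w1 - w2)))"
proof -
  define F where "F = ffun fbar A B c"
  define GF where "GF = grad F"
  define Gg where "Gg = grad g"
  have DF: "\<And>q. (F has_derivative (\<lambda>h. GF q \<bullet> h)) (at q)"
    unfolding GF_def F_def using ffun_diff[OF fbar_C1(1)] grad_works by blast
  have Dg: "\<And>q. (g has_derivative (\<lambda>h. Gg q \<bullet> h)) (at q)"
    unfolding Gg_def using g_C1(1) grad_works by blast
  have Lf0: "0 \<le> Lf" using Lf_pos by simp
  have LF: "\<And>q1 q2. q1 \<in> (X \<times> Y) \<times> Lam \<Longrightarrow> q2 \<in> (X \<times> Y) \<times> Lam \<Longrightarrow> norm (GF q1 - GF q2) \<le> Lf * norm (q1 - q2)"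
    using Lf_lip unfolding GF_def F_def lipschitz_on_def dist_norm by blast
  have Lg0: "0 \<le> Lg" using Lg_lip lipschitz_on_nonneg by blast
  have LG: "\<And>q1 q2. q1 \<in> Y \<times> Lam \<Longrightarrow> q2 \<in> Y \<times> Lam \<Longrightarrow> norm (Gg q1 - Gg q2) \<le> Lg * norm (q1 - q2)"
    using Lg_lip unfolding Gg_def lipschitz_on_def dist_norm by blast
  have rho0: "0 \<le> rho" using rho_pos by simp
  have tau0: "0 \<le> tau" using tau_ge Lf0 Lg0 rho0 kappa_pos by (smt (verit) mult_nonneg_nonneg)
  have tg: "Lf + 2 * rho * Lg + kappa \<le> tau" using tau_ge by simp
  note H = DF Dg Lf0 LF Lg0 LG rho0 tau0 X(1) Y(1) Lam(1) Y(2) Lam(2) Y(3) Lam(3) kappa_pos tg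
  define ps where "ps = pstar F g rho tau Y Lam"
  have Qeq: "\<And>x z u v y l. Qfun fbar A B c g rho tau x z u v y l = QQ F g rho tau (x, z, u, v) (y, l)"
    by (simp add: Qfun_def Pfun_def QQ_def F_def)
  have ps1: "ps w \<in> Y \<times> Lam" for w unfolding ps_def by (rule pstar(1)[OF H])
  have ps2: "\<And>w q. q \<in> Y \<times> Lam \<Longrightarrow> QQ F g rho tau w q \<le> QQ F g rho tau w (ps w)"
    unfolding ps_def by (rule pstar(2)[OF H])
  have Geq: "(\<lambda>(x, z, u, v).
                 (grad (\<lambda>x'. ffun fbar A B c ((x', fst (ps (x, z, u, v))), snd (ps (x, z, u, v)))) x,
                  rho *\<^sub>R grad (\<lambda>z'. g (z', snd (ps (x, z, u, v)))) z,
                  tau *\<^sub>R (fst (ps (x, z, u, v)) - u),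
                  tau *\<^sub>R (snd (ps (x, z, u, v)) - v)))
        = (\<lambda>w. GW GF Gg rho tau w (ps w))"
    using grad_partial1[OF DF] grad_partial2[OF Dg]
    by (auto simp: fun_eq_iff GW_def F_def)
  have theq: "theta fbar A B c g rho tau Y Lam = thetaQ F g rho tau Y Lam"
  proof (rule ext)
    fix w :: "(real^'dx) \<times> (real^'dy) \<times> (real^'dy) \<times> (real^'dl)"
    obtain x z u v where w: "w = (x, z, u, v)" by (cases w) auto
    have "(SUP p \<in> Y \<times> Lam. QQ F g rho tau w p) = QQ F g rho tau w (ps w)"
      by (rule cSup_eq_maximum) (use ps1[of w] ps2[of _ w] in auto)
    then show "theta fbar A B c g rho tau Y Lam w = thetaQ F g rho tau Y Lam w"
      unfolding theta_def thetaQ_def[OF H] w using Qeq by (simp add: ps_def w thetaQ_def[OF H])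
  qed
  show ?thesis
  proof (intro exI[of _ "\<lambda>w. fst (ps w)"] exI[of _ "\<lambda>w. snd (ps w)"] conjI)
    show "\<forall>w\<in>X \<times> Y \<times> (UNIV::(real^'dy) set) \<times> (UNIV::(real^'dl) set).
        case w of (x, z, u, v) \<Rightarrow>
          (fst (ps w), snd (ps w)) \<in> Y \<times> Lam \<and>
          (\<forall>p\<in>Y \<times> Lam. Qfun fbar A B c g rho tau x z u v (fst p) (snd p)
                          \<le> Qfun fbar A B c g rho tau x z u v (fst (ps w)) (snd (ps w))) \<and>
          (\<forall>p\<in>Y \<times> Lam.
             (\<forall>q\<in>Y \<times> Lam. Qfun fbar A B c g rho tau x z u v (fst q) (snd q)
                            \<le> Qfun fbar A B c g rho tau x z u v (fst p) (snd p))
             \<longrightarrow> p = (fst (ps w), snd (ps w)))"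
    proof (intro ballI)
      fix w assume wD: "w \<in> X \<times> Y \<times> (UNIV::(real^'dy) set) \<times> (UNIV::(real^'dl) set)"
      obtain x z u v where w: "w = (x, z, u, v)" by (cases w) auto
      have m: "QQ F g rho tau w p \<le> QQ F g rho tau w (ps w)" if "p \<in> Y \<times> Lam" for p
        by (rule ps2[OF that])
      have un: "p = ps w" if "p \<in> Y \<times> Lam" "\<forall>q\<in>Y \<times> Lam. QQ F g rho tau w q \<le> QQ F g rho tau w p" for p
        unfolding ps_def using unique_max[OF H wD that(1)] that(2) by blast
      show "case w of (x, z, u, v) \<Rightarrow>
          (fst (ps w), snd (ps w)) \<in> Y \<times> Lam \<and>
          (\<forall>p\<in>Y \<times> Lam. Qfun fbar A B c g rho tau x z u v (fst p) (snd p)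
                          \<le> Qfun fbar A B c g rho tau x z u v (fst (ps w)) (snd (ps w))) \<and>
          (\<forall>p\<in>Y \<times> Lam.
             (\<forall>q\<in>Y \<times> Lam. Qfun fbar A B c g rho tau x z u v (fst q) (snd q)
                            \<le> Qfun fbar A B c g rho tau x z u v (fst p) (snd p))
             \<longrightarrow> p = (fst (ps w), snd (ps w)))"
      proof -
        have A: "(fst (ps w), snd (ps w)) \<in> Y \<times> Lam" unfolding prod.collapse by (rule ps1)
        have B: "\<forall>p\<in>Y \<times> Lam. QQ F g rho tau w (fst p, snd p) \<le> QQ F g rho tau w (fst (ps w), snd (ps w))"
          unfolding prod.collapse using m by blast
        have C: "\<forall>p\<in>Y \<times> Lam. (\<forall>q\<in>Y \<times> Lam. QQ F g rho tau w (fst q, snd q) \<le> QQ F g rho tau w (fst p, snd p))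
             \<longrightarrow> p = (fst (ps w), snd (ps w))" unfolding prod.collapse using un by blast
        show ?thesis unfolding w prod.case Qeq using A B C unfolding w by blast
      qed
    qed
  next
    show "\<forall>w1\<in>X \<times> Y \<times> (UNIV::(real^'dy) set) \<times> (UNIV::(real^'dl) set).
       \<forall>w2\<in>X \<times> Y \<times> (UNIV::(real^'dy) set) \<times> (UNIV::(real^'dl) set).
        norm ((fst (ps w1), snd (ps w1)) - (fst (ps w2), snd (ps w2)))
          \<le> ((Lf + 2 * rho * Lg) + tau) / kappa * norm (w1 - w2)"
      using pstar_lip[OF H] unfolding ps_def by simp
  next
    let ?D = "X \<times> Y \<times> (UNIV::(real^'dy) set) \<times> (UNIV::(real^'dl) set)"
    let ?Lth = "(Lf + rho * Lg + 2 * tau) * (1 + ((Lf + 2 * rho * Lg) + tau) / kappa)"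
    have d: "\<forall>w\<in>?D. (theta fbar A B c g rho tau Y Lam has_derivative (\<lambda>h. GW GF Gg rho tau w (ps w) \<bullet> h)) (at w within ?D)"
      unfolding theq ps_def using theta_deriv[OF H] by blast
    have l: "\<forall>w1\<in>?D. \<forall>w2\<in>?D. norm (GW GF Gg rho tau w1 (ps w1) - GW GF Gg rho tau w2 (ps w2)) \<le> ?Lth * norm (w1 - w2)"
      unfolding ps_def using G_lip[OF H] by blast
    have c: "continuous_on ?D (\<lambda>w. GW GF Gg rho tau w (ps w))"
    proof (rule lipschitz_on_continuous_on)
      show "?Lth-lipschitz_on ?D (\<lambda>w. GW GF Gg rho tau w (ps w))"
      proof (rule lipschitz_onI)
        show "0 \<le> ?Lth" using Lf0 Lg0 rho0 tau0 kappa_pos by simp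
      next
        fix w1 w2 assume w12: "w1 \<in> ?D" "w2 \<in> ?D"
        show "dist (GW GF Gg rho tau w1 (ps w1)) (GW GF Gg rho tau w2 (ps w2)) \<le> ?Lth * dist w1 w2"
          unfolding dist_norm using l w12 by blast
      qed
    qed
    show "let D = ?D;
          G = (\<lambda>(x, z, u, v).
                 (grad (\<lambda>x'. ffun fbar A B c ((x', fst (ps (x, z, u, v))), snd (ps (x, z, u, v)))) x,
                  rho *\<^sub>R grad (\<lambda>z'. g (z', snd (ps (x, z, u, v)))) z,
                  tau *\<^sub>R (fst (ps (x, z, u, v)) - u),
                  tau *\<^sub>R (snd (ps (x, z, u, v)) - v)));
          Lth = ?Lth
      in (\<forall>w\<in>D. (theta fbar A B c g rho tau Y Lam has_derivative (\<lambda>h. G w \<bullet> h)) (at w within D)) \<and>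
         continuous_on D G \<and>
         (\<forall>w1\<in>D. \<forall>w2\<in>D. norm (G w1 - G w2) \<le> Lth * norm (w1 - w2))"
      unfolding Let_def Geq by (intro conjI d c l)
  qed
qed

end
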